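(* Let $0<\epsilon<1$ and let $\bar b,\bar w>0$ satisfy $b/2\le \bar b\le 2b$ and $w/6\le \bar w\le 6w$. Then the number of butterflies of $G$ all four of whose edges are non-light (with respect to $\bar b,\bar w,\epsilon$) is at most $c_H\epsilon b$, where $c_H=1.77\times 10^4$.
   Context: Let $G=(V,E)$ be a bipartite graph with bipartition $V=U\cup L$ and $m=|E|$ edges; $d_v$ is the degree of vertex $v$, and for an edge $e=(u,v)$ let $d_e=d_u+d_v-2$. A wedge is a path with two edges; $w$ is the number of wedges of $G$. A butterfly is a set $\{u_1,u_2,v_1,v_2\}$ of distinct vertices with $u_1,u_2\in U$, $v_1,v_2\in L$ such that all four pairs $u_iv_j$ are edges; its edges are these four edges. $b$ is the number of butterflies and $b(e)$ the number of butterflies containing edge $e$. Given $\bar b,\bar w,\epsilon>0$, an edge $e$ is heavy if $b(e)>2\bar b^{3/4}/\epsilon^{1/4}$ or $d_e>\bar w/(\epsilon\bar b)^{1/4}$; it is light if $b(e)<\bar b^{3/4}/(2\epsilon^{1/4})$ and $d_e<\bar w/(\epsilon\bar b)^{1/4}$. An edge is non-light if it is not light (an edge may be neither heavy nor light). *)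

theory Defs
  imports Complex_Main
begin

definition bipartite_graph :: "'a set \<Rightarrow> 'a set \<Rightarrow> ('a \<times> 'a) set \<Rightarrow> bool" where
  "bipartite_graph U L E \<longleftrightarrow> finite U \<and> finite L \<and> U \<inter> L = {} \<and> E \<subseteq> U \<times> L"

definition degree :: "('a \<times> 'a) set \<Rightarrow> 'a \<Rightarrow> nat" where
  "degree E v = card {e \<in> E. fst e = v \<or> snd e = v}"

definition edge_degree :: "('a \<times> 'a) set \<Rightarrow> 'a \<times> 'a \<Rightarrow> real" where
  "edge_degree E e = real (degree E (fst e)) + real (degree E (snd e)) - 2"

definition wedges :: "('a \<times> 'a) set \<Rightarrow> ('a \<times> 'a) set set" where
  "wedges E = {{e1, e2} | e1 e2. e1 \<in> E \<and> e2 \<in> E \<and> e1 \<noteq> e2 \<and>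
      {fst e1, snd e1} \<inter> {fst e2, snd e2} \<noteq> {}}"

definition wedge_count :: "('a \<times> 'a) set \<Rightarrow> nat" where
  "wedge_count E = card (wedges E)"

definition butterflies :: "'a set \<Rightarrow> 'a set \<Rightarrow> ('a \<times> 'a) set \<Rightarrow> 'a set set" where
  "butterflies U L E = {{u1, u2, v1, v2} | u1 u2 v1 v2.
      u1 \<in> U \<and> u2 \<in> U \<and> v1 \<in> L \<and> v2 \<in> L \<and> u1 \<noteq> u2 \<and> v1 \<noteq> v2 \<and>
      (u1, v1) \<in> E \<and> (u1, v2) \<in> E \<and> (u2, v1) \<in> E \<and> (u2, v2) \<in> E}"

definition butterfly_edges :: "('a \<times> 'a) set \<Rightarrow> 'a set \<Rightarrow> ('a \<times> 'a) set" where
  "butterfly_edges E B = {e \<in> E. fst e \<in> B \<and> snd e \<in> B}"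

definition butterfly_count :: "'a set \<Rightarrow> 'a set \<Rightarrow> ('a \<times> 'a) set \<Rightarrow> nat" where
  "butterfly_count U L E = card (butterflies U L E)"

definition edge_butterfly_count :: "'a set \<Rightarrow> 'a set \<Rightarrow> ('a \<times> 'a) set \<Rightarrow> 'a \<times> 'a \<Rightarrow> nat" where
  "edge_butterfly_count U L E e = card {B \<in> butterflies U L E. e \<in> butterfly_edges E B}"

definition light :: "'a set \<Rightarrow> 'a set \<Rightarrow> ('a \<times> 'a) set \<Rightarrow> real \<Rightarrow> real \<Rightarrow> real \<Rightarrow> 'a \<times> 'a \<Rightarrow> bool" where
  "light U L E bb ww eps e \<longleftrightarrow>
     real (edge_butterfly_count U L E e) < bb powr (3/4) / (2 * eps powr (1/4)) \<and>
     edge_degree E e < ww / (eps * bb) powr (1/4)"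

definition heavy :: "'a set \<Rightarrow> 'a set \<Rightarrow> ('a \<times> 'a) set \<Rightarrow> real \<Rightarrow> real \<Rightarrow> real \<Rightarrow> 'a \<times> 'a \<Rightarrow> bool" where
  "heavy U L E bb ww eps e \<longleftrightarrow>
     real (edge_butterfly_count U L E e) > 2 * bb powr (3/4) / eps powr (1/4) \<or>
     edge_degree E e > ww / (eps * bb) powr (1/4)"

end

theory Submission
  imports Defs
begin

lemma markov_card:
  fixes f :: "'b \<Rightarrow> real"
  assumes "finite A" "\<And>x. x \<in> A \<Longrightarrow> 0 \<le> f x" "0 < T"
  shows "real (card {x \<in> A. T \<le> f x}) * T \<le> sum f A"
proof -
  have "real (card {x \<in> A. T \<le> f x}) * T = (\<Sum>x\<in>{x \<in> A. T \<le> f x}. T)" by simp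
  also have "\<dots> \<le> (\<Sum>x\<in>{x \<in> A. T \<le> f x}. f x)" by (rule sum_mono) auto
  also have "\<dots> \<le> sum f A" by (rule sum_mono2) (use assms in auto)
  finally show ?thesis .
qed

lemma finite_E: "bipartite_graph U L E \<Longrightarrow> finite E"
  unfolding bipartite_graph_def by (meson finite_SigmaI finite_subset)

lemma finite_bfs: assumes "bipartite_graph U L E" shows "finite (butterflies U L E)"
proof -
  have "butterflies U L E \<subseteq> Pow (U \<union> L)" unfolding butterflies_def by auto
  moreover have "finite (Pow (U \<union> L))" using assms unfolding bipartite_graph_def by auto
  ultimately show ?thesis by (rule finite_subset)
qed

lemma be_card:
  assumes "bipartite_graph U L E" "B \<in> butterflies U L E"
  shows "card (butterfly_edges E B) \<le> 4"
proof -
  obtain u1 u2 v1 v2 where B: "B = {u1, u2, v1, v2}" "u1 \<in> U" "u2 \<in> U" "v1 \<in> L" "v2 \<in> L"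
    using assms(2) unfolding butterflies_def by blast
  have "butterfly_edges E B \<subseteq> set [(u1,v1),(u1,v2),(u2,v1),(u2,v2)]"
  proof
    fix e assume e: "e \<in> butterfly_edges E B"
    then have "fst e \<in> U" "snd e \<in> L" "fst e \<in> B" "snd e \<in> B" "e \<in> E"
      using assms(1) unfolding butterfly_edges_def bipartite_graph_def by auto
    with B assms(1) have "fst e \<in> {u1,u2}" "snd e \<in> {v1,v2}"
      unfolding bipartite_graph_def by auto
    then show "e \<in> set [(u1,v1),(u1,v2),(u2,v1),(u2,v2)]" by (cases e) auto
  qed
  then have "card (butterfly_edges E B) \<le> card (set [(u1,v1),(u1,v2),(u2,v1),(u2,v2)])"
    by (intro card_mono) auto
  also have "\<dots> \<le> 4" using card_length[of "[(u1,v1),(u1,v2),(u2,v1),(u2,v2)]"] by simp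
  finally show ?thesis .
qed

lemma bsum:
  assumes "bipartite_graph U L E"
  shows "(\<Sum>e\<in>E. edge_butterfly_count U L E e) \<le> 4 * butterfly_count U L E"
proof -
  have fE: "finite E" using finite_E[OF assms] .
  have fB: "finite (butterflies U L E)" using finite_bfs[OF assms] .
  have "(\<Sum>e\<in>E. edge_butterfly_count U L E e)
      = (\<Sum>e\<in>E. \<Sum>B\<in>butterflies U L E. if e \<in> butterfly_edges E B then 1 else 0)"
    unfolding edge_butterfly_count_def
    by (intro sum.cong refl) (simp add: sum.inter_filter[OF fB, symmetric])
  also have "\<dots> = (\<Sum>B\<in>butterflies U L E. \<Sum>e\<in>E. if e \<in> butterfly_edges E B then 1 else 0)"
    by (rule sum.swap)
  also have "\<dots> = (\<Sum>B\<in>butterflies U L E. card (butterfly_edges E B))"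
  proof (intro sum.cong refl)
    fix B
    have "(\<Sum>e\<in>E. if e \<in> butterfly_edges E B then 1 else 0) = card {e \<in> E. e \<in> butterfly_edges E B}"
      by (simp add: sum.inter_filter[OF fE, symmetric])
    also have "{e \<in> E. e \<in> butterfly_edges E B} = butterfly_edges E B"
      unfolding butterfly_edges_def by auto
    finally show "(\<Sum>e\<in>E. if e \<in> butterfly_edges E B then 1 else 0) = card (butterfly_edges E B)" .
  qed
  also have "\<dots> \<le> (\<Sum>B\<in>butterflies U L E. 4)"
    by (rule sum_mono) (rule be_card[OF assms])
  also have "\<dots> = 4 * butterfly_count U L E" unfolding butterfly_count_def by simp
  finally show ?thesis .
qed

definition nbr :: "('a \<times> 'a) set \<Rightarrow> 'a \<times> 'a \<Rightarrow> ('a \<times> 'a) set" where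
  "nbr E e = {e' \<in> E. e' \<noteq> e \<and> {fst e, snd e} \<inter> {fst e', snd e'} \<noteq> {}}"

lemma wsum:
  assumes "bipartite_graph U L E"
  shows "(\<Sum>e\<in>E. card (nbr E e)) \<le> 2 * wedge_count E"
proof -
  have fE: "finite E" using finite_E[OF assms] .
  have fN: "\<And>e. finite (nbr E e)" using fE unfolding nbr_def by auto
  have fW: "finite (wedges E)"
  proof (rule finite_subset)
    show "wedges E \<subseteq> Pow E" unfolding wedges_def by auto
  qed (use fE in auto)
  define F where "F W = {p \<in> Sigma E (nbr E). {fst p, snd p} = W}" for W
  have "(\<Sum>e\<in>E. card (nbr E e)) = card (Sigma E (nbr E))"
    using fE fN by (simp add: card_SigmaI)
  also have "Sigma E (nbr E) \<subseteq> (\<Union>W\<in>wedges E. F W)"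
  proof
    fix p assume p: "p \<in> Sigma E (nbr E)"
    then obtain e1 e2 where pe: "p = (e1, e2)" "e1 \<in> E" "e2 \<in> nbr E e1" by auto
    then have "e2 \<in> E" "e2 \<noteq> e1" "{fst e1, snd e1} \<inter> {fst e2, snd e2} \<noteq> {}"
      unfolding nbr_def by auto
    then have "{fst p, snd p} \<in> wedges E" unfolding wedges_def using pe
      by (smt (verit, ccfv_threshold) fst_conv inf_commute mem_Collect_eq snd_conv)
    moreover have "p \<in> F {fst p, snd p}" using p unfolding F_def by auto
    ultimately show "p \<in> (\<Union>W\<in>wedges E. F W)" by blast
  qed
  then have "card (Sigma E (nbr E)) \<le> card (\<Union>W\<in>wedges E. F W)"
    by (intro card_mono) (use fW fE fN in \<open>auto simp: F_def\<close>)
  also have "\<dots> \<le> (\<Sum>W\<in>wedges E. card (F W))" by (rule card_UN_le[OF fW])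
  also have "\<dots> \<le> (\<Sum>W\<in>wedges E. 2)"
  proof (rule sum_mono)
    fix W assume "W \<in> wedges E"
    then obtain e1 e2 where W: "W = {e1, e2}" unfolding wedges_def by blast
    have "F W \<subseteq> set [(e1,e2),(e2,e1)]"
      unfolding F_def W by (auto simp: doubleton_eq_iff)
    then have "card (F W) \<le> card (set [(e1,e2),(e2,e1)])" by (intro card_mono) auto
    also have "\<dots> \<le> 2" using card_length[of "[(e1,e2),(e2,e1)]"] by simp
    finally show "card (F W) \<le> 2" .
  qed
  also have "\<dots> = 2 * wedge_count E" unfolding wedge_count_def by simp
  finally show ?thesis .
qed

lemma de_le:
  assumes "bipartite_graph U L E" "e \<in> E"
  shows "edge_degree E e \<le> real (card (nbr E e))"
proof -
  obtain u v where e: "e = (u, v)" by (cases e)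
  have fE: "finite E" using finite_E[OF assms(1)] .
  have UL: "U \<inter> L = {}" "E \<subseteq> U \<times> L" using assms(1) unfolding bipartite_graph_def by auto
  define A where "A = {e' \<in> E. fst e' = u}"
  define Bv where "Bv = {e' \<in> E. snd e' = v}"
  have uU: "u \<in> U" "v \<in> L" using UL assms(2) e by auto
  have sL: "snd x \<in> L" "fst x \<in> U" if "x \<in> E" for x using UL(2) that by auto
  have dA: "degree E u = card A" unfolding degree_def A_def
    by (rule arg_cong[where f=card]) (use UL(1) uU sL in fastforce)
  have dB: "degree E v = card Bv" unfolding degree_def Bv_def
    by (rule arg_cong[where f=card]) (use UL(1) uU sL in fastforce)
  have fA: "finite A" "finite Bv" using fE unfolding A_def Bv_def by auto
  have eA: "e \<in> A" "e \<in> Bv" using assms(2) e unfolding A_def Bv_def by auto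
  have cA: "real (card A) = real (card (A - {e})) + 1"
  proof -
    have "card A > 0" using fA eA card_gt_0_iff by blast
    then have "card (A - {e}) + 1 = card A" using fA eA by (simp add: card_Diff_singleton)
    then show ?thesis by (metis of_nat_1 of_nat_add)
  qed
  have cB: "real (card Bv) = real (card (Bv - {e})) + 1"
  proof -
    have "card Bv > 0" using fA eA card_gt_0_iff by blast
    then have "card (Bv - {e}) + 1 = card Bv" using fA eA by (simp add: card_Diff_singleton)
    then show ?thesis by (metis of_nat_1 of_nat_add)
  qed
  have disj: "(A - {e}) \<inter> (Bv - {e}) = {}" unfolding A_def Bv_def using e by auto
  have "card (A - {e}) + card (Bv - {e}) = card ((A - {e}) \<union> (Bv - {e}))"
    using fA disj by (simp add: card_Un_disjoint)
  also have "\<dots> \<le> card (nbr E e)"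
    by (rule card_mono) (use fE e in \<open>auto simp: nbr_def A_def Bv_def\<close>)
  finally have "card (A - {e}) + card (Bv - {e}) \<le> card (nbr E e)" .
  then have "real (card (A - {e})) + real (card (Bv - {e})) \<le> real (card (nbr E e))"
    by (metis of_nat_add of_nat_le_iff)
  moreover have "edge_degree E e = real (card A) + real (card Bv) - 2"
    unfolding edge_degree_def using e dA dB by simp
  ultimately show ?thesis using cA cB by linarith
qed

lemma bad_struct:
  assumes "bipartite_graph U L E" "B \<in> butterflies U L E" "\<forall>e \<in> butterfly_edges E B. Q e"
  obtains u1 u2 v1 v2 where "B = {u1, u2, v1, v2}" "u1 \<noteq> u2" "v1 \<noteq> v2"
    "u1 \<noteq> v1" "u1 \<noteq> v2" "u2 \<noteq> v1" "u2 \<noteq> v2"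
    "(u1,v1) \<in> {e \<in> E. Q e}" "(u1,v2) \<in> {e \<in> E. Q e}"
    "(u2,v1) \<in> {e \<in> E. Q e}" "(u2,v2) \<in> {e \<in> E. Q e}"
proof -
  obtain u1 u2 v1 v2 where B: "B = {u1, u2, v1, v2}" "u1 \<in> U" "u2 \<in> U" "v1 \<in> L" "v2 \<in> L"
    "u1 \<noteq> u2" "v1 \<noteq> v2" "(u1, v1) \<in> E" "(u1, v2) \<in> E" "(u2, v1) \<in> E" "(u2, v2) \<in> E"
    using assms(2) unfolding butterflies_def by blast
  have d: "u1 \<noteq> v1" "u1 \<noteq> v2" "u2 \<noteq> v1" "u2 \<noteq> v2"
    using B assms(1) unfolding bipartite_graph_def by auto
  have "(u1,v1) \<in> butterfly_edges E B" "(u1,v2) \<in> butterfly_edges E B"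
       "(u2,v1) \<in> butterfly_edges E B" "(u2,v2) \<in> butterfly_edges E B"
    unfolding butterfly_edges_def using B by auto
  then have q: "Q (u1,v1)" "Q (u1,v2)" "Q (u2,v1)" "Q (u2,v2)" using assms(3) by blast+
  show ?thesis using that[OF B(1) B(6) B(7) d] q B(8-11) by simp
qed

lemma bad_count:
  fixes Q :: "'a \<times> 'a \<Rightarrow> bool"
  assumes G: "bipartite_graph U L E"
  defines "BB \<equiv> {B \<in> butterflies U L E. \<forall>e \<in> butterfly_edges E B. Q e}"
      and "H \<equiv> {e \<in> E. Q e}"
  shows "4 * card BB \<le> card H * card H" and "BB \<noteq> {} \<Longrightarrow> 4 \<le> card H"
proof -
  have fE: "finite E" using finite_E[OF G] .
  have fH: "finite H" using fE unfolding H_def by auto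
  have fBB: "finite BB" using finite_bfs[OF G] unfolding BB_def by auto
  define f :: "('a \<times> 'a) \<times> ('a \<times> 'a) \<Rightarrow> 'a set" where
    "f p = {fst (fst p), fst (snd p), snd (fst p), snd (snd p)}" for p
  define P where "P B = {p \<in> H \<times> H. f p = B}" for B
  have P4: "4 \<le> card (P B)" if "B \<in> BB" for B
  proof -
    from that have "B \<in> butterflies U L E" "\<forall>e \<in> butterfly_edges E B. Q e" unfolding BB_def by auto
    note bs = this
    obtain u1 u2 v1 v2 where b: "B = {u1, u2, v1, v2}" "u1 \<noteq> u2" "v1 \<noteq> v2"
      "u1 \<noteq> v1" "u1 \<noteq> v2" "u2 \<noteq> v1" "u2 \<noteq> v2"
      "(u1,v1) \<in> {e \<in> E. Q e}" "(u1,v2) \<in> {e \<in> E. Q e}" "(u2,v1) \<in> {e \<in> E. Q e}" "(u2,v2) \<in> {e \<in> E. Q e}"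
      by (rule bad_struct[OF G bs])
    have h: "(u1,v1) \<in> H" "(u1,v2) \<in> H" "(u2,v1) \<in> H" "(u2,v2) \<in> H" using b(8-11) unfolding H_def by simp_all
    let ?S = "{((u1,v1),(u2,v2)), ((u2,v2),(u1,v1)), ((u1,v2),(u2,v1)), ((u2,v1),(u1,v2))}"
    have "f ((u1,v1),(u2,v2)) = B" "f ((u2,v2),(u1,v1)) = B" "f ((u1,v2),(u2,v1)) = B" "f ((u2,v1),(u1,v2)) = B"
      unfolding f_def b(1) by auto
    then have "?S \<subseteq> P B" unfolding P_def using h by simp
    moreover have "card ?S = 4" using b(2-7) by simp
    moreover have "finite (P B)" using fH unfolding P_def by auto
    ultimately show ?thesis using card_mono[of "P B" ?S] by simp
  qed
  have "4 * card BB = (\<Sum>B\<in>BB. 4)" by simp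
  also have "\<dots> \<le> (\<Sum>B\<in>BB. card (P B))" by (rule sum_mono) (rule P4)
  also have "\<dots> = card (\<Union>B\<in>BB. P B)"
  proof (rule card_UN_disjoint[symmetric])
    show "finite BB" by (rule fBB)
    show "\<forall>B\<in>BB. finite (P B)"
    proof
      fix B have "P B \<subseteq> H \<times> H" unfolding P_def by (rule Collect_subset)
      then show "finite (P B)" using fH by (meson finite_SigmaI finite_subset)
    qed
    show "\<forall>A\<in>BB. \<forall>B\<in>BB. A \<noteq> B \<longrightarrow> P A \<inter> P B = {}"
      unfolding P_def by blast
  qed
  also have "\<dots> \<le> card (H \<times> H)"
  proof (rule card_mono)
    show "finite (H \<times> H)" using fH by simp
    show "(\<Union>B\<in>BB. P B) \<subseteq> H \<times> H" unfolding P_def by blast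
  qed
  also have "\<dots> = card H * card H" by (simp add: card_cartesian_product)
  finally show "4 * card BB \<le> card H * card H" .
  assume "BB \<noteq> {}"
  then obtain B where "B \<in> butterflies U L E" "\<forall>e \<in> butterfly_edges E B. Q e" unfolding BB_def by auto
  note bs = this
  obtain u1 u2 v1 v2 where b0: "B = {u1, u2, v1, v2}" "u1 \<noteq> u2" "v1 \<noteq> v2"
      "u1 \<noteq> v1" "u1 \<noteq> v2" "u2 \<noteq> v1" "u2 \<noteq> v2"
      "(u1,v1) \<in> {e \<in> E. Q e}" "(u1,v2) \<in> {e \<in> E. Q e}" "(u2,v1) \<in> {e \<in> E. Q e}" "(u2,v2) \<in> {e \<in> E. Q e}"
      by (rule bad_struct[OF G bs])
  have b: "u1 \<noteq> u2" "v1 \<noteq> v2" "(u1,v1) \<in> H" "(u1,v2) \<in> H" "(u2,v1) \<in> H" "(u2,v2) \<in> H"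
    using b0 unfolding H_def by simp_all
  let ?S = "{(u1,v1), (u1,v2), (u2,v1), (u2,v2)}"
  have "?S \<subseteq> H" using b by simp
  moreover have "card ?S = 4" using b by simp
  ultimately show "4 \<le> card H" using fH card_mono[of H ?S] by simp
qed

lemma pow4_le: "(a::real)^4 \<le> c^4 \<Longrightarrow> 0 \<le> c \<Longrightarrow> a \<le> c"
  by (rule power_le_imp_le_base[of a 3 c]) (simp_all add: numeral_eq_Suc)

theorem proposition1:
  fixes U L :: "'a set" and E :: "('a \<times> 'a) set" and bb ww eps :: real
  assumes "bipartite_graph U L E"
    and "0 < eps" and "eps < 1"
    and "0 < bb" and "0 < ww"
    and "real (butterfly_count U L E) / 2 \<le> bb" and "bb \<le> 2 * real (butterfly_count U L E)"
    and "real (wedge_count E) / 6 \<le> ww" and "ww \<le> 6 * real (wedge_count E)"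
  shows "real (card {B \<in> butterflies U L E. \<forall>e \<in> butterfly_edges E B. \<not> light U L E bb ww eps e})
           \<le> 1.77 * 10^4 * eps * real (butterfly_count U L E)"
proof -
  note G = assms(1)
  define b where "b = real (butterfly_count U L E)"
  define w where "w = real (wedge_count E)"
  define Q where "Q e = (\<not> light U L E bb ww eps e)" for e
  define BB where "BB = {B \<in> butterflies U L E. \<forall>e \<in> butterfly_edges E B. Q e}"
  define H where "H = {e \<in> E. Q e}"
  have BBeq: "{B \<in> butterflies U L E. \<forall>e \<in> butterfly_edges E B. \<not> light U L E bb ww eps e} = BB"
    unfolding BB_def Q_def by simp
  have bc1: "4 * card BB \<le> card H * card H" and bc2: "BB \<noteq> {} \<Longrightarrow> 4 \<le> card H"
    unfolding BB_def H_def by (rule bad_count(1)[OF G], rule bad_count(2)[OF G])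
  have fE: "finite E" using finite_E[OF G] .
  have bpos: "b > 0" using assms(4,7) unfolding b_def by linarith
  have wpos: "w > 0" using assms(5,9) unfolding w_def by linarith
  define X where "X = bb powr (3/4) / (2 * eps powr (1/4))"
  define Y where "Y = ww / (eps * bb) powr (1/4)"
  define q where "q = bb powr (1/4)"
  define e4 where "e4 = eps powr (1/4)"
  define b4 where "b4 = b powr (1/4)"
  define r where "r = (2::real) powr (1/4)"
  have pos: "q > 0" "e4 > 0" "b4 > 0" "r > 0" using assms bpos unfolding q_def e4_def b4_def r_def by auto
  have q4: "q^4 = bb" unfolding q_def using assms(4) by (simp add: powr_realpow[symmetric] powr_powr)
  have e44: "e4^4 = eps" unfolding e4_def using assms(2) by (simp add: powr_realpow[symmetric] powr_powr)
  have b44: "b4^4 = b" unfolding b4_def using bpos by (simp add: powr_realpow[symmetric] powr_powr)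
  have r4: "r^4 = 2" unfolding r_def by (simp add: powr_realpow[symmetric] powr_powr)
  have q3: "bb powr (3/4) = q^3" unfolding q_def using assms(4) by (simp add: powr_realpow[symmetric] powr_powr)
  have Xe: "X = q^3 / (2 * e4)" unfolding X_def q3 e4_def ..
  have Ye: "Y = ww / (e4 * q)" unfolding Y_def e4_def q_def using assms(2,4) by (simp add: powr_mult)
  have Xpos: "X > 0" "Y > 0" using pos assms(5) unfolding Xe Ye by auto
  have r12: "r \<le> 1.2"
  proof (rule ccontr)
    assume "\<not> r \<le> 1.2"
    then have "(1.2::real)^4 < r^4" by (intro power_strict_mono) auto
    then show False using r4 by (simp add: power_divide)
  qed
  have b4q: "b4 \<le> q * r"
  proof -
    have "b4 ^ 4 \<le> (q * r) ^ 4" unfolding power_mult_distrib q4 r4 b44 using assms(6) unfolding b_def by simp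
    moreover have "0 \<le> q * r" using pos by simp
    ultimately show ?thesis by (rule pow4_le)
  qed
  have qb4: "q \<le> r * b4"
  proof -
    have "q ^ 4 \<le> (r * b4) ^ 4" unfolding power_mult_distrib q4 r4 b44 using assms(7) unfolding b_def by simp
    moreover have "0 \<le> r * b4" using pos by simp
    ultimately show ?thesis by (rule pow4_le)
  qed
  define S1 where "S1 = {e \<in> E. X \<le> real (edge_butterfly_count U L E e)}"
  define S2 where "S2 = {e \<in> E. Y \<le> real (card (nbr E e))}"
  have HS: "H \<subseteq> S1 \<union> S2"
  proof
    fix e assume "e \<in> H"
    then have e: "e \<in> E" "\<not> light U L E bb ww eps e" unfolding H_def Q_def by auto
    have "edge_degree E e \<le> real (card (nbr E e))" by (rule de_le[OF G e(1)])
    moreover have "\<not> (real (edge_butterfly_count U L E e) < X \<and> edge_degree E e < Y)"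
      using e(2) unfolding light_def X_def Y_def .
    ultimately have "X \<le> real (edge_butterfly_count U L E e) \<or> Y \<le> real (card (nbr E e))"
      by linarith
    then show "e \<in> S1 \<union> S2" using e(1) unfolding S1_def S2_def by blast
  qed
  have fS: "finite S1" "finite S2" using fE unfolding S1_def S2_def by auto
  have hle: "real (card H) \<le> real (card S1) + real (card S2)"
  proof -
    have "card H \<le> card (S1 \<union> S2)" by (rule card_mono) (use fS HS in auto)
    also have "\<dots> \<le> card S1 + card S2" by (rule card_Un_le)
    finally show ?thesis by linarith
  qed
  have m1: "real (card S1) * X \<le> 4 * b"
  proof -
    have "real (card S1) * X \<le> (\<Sum>e\<in>E. real (edge_butterfly_count U L E e))"
      unfolding S1_def by (rule markov_card[OF fE _ Xpos(1)]) auto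
    also have "\<dots> = real (\<Sum>e\<in>E. edge_butterfly_count U L E e)" by simp
    also have "\<dots> \<le> real (4 * butterfly_count U L E)" using bsum[OF G] by linarith
    finally show ?thesis unfolding b_def by simp
  qed
  have m2: "real (card S2) * Y \<le> 2 * w"
  proof -
    have "real (card S2) * Y \<le> (\<Sum>e\<in>E. real (card (nbr E e)))"
      unfolding S2_def by (rule markov_card[OF fE _ Xpos(2)]) auto
    also have "\<dots> = real (\<Sum>e\<in>E. card (nbr E e))" by simp
    also have "\<dots> \<le> real (2 * wedge_count E)" using wsum[OF G] by linarith
    finally show ?thesis unfolding w_def by simp
  qed
  define h1 where "h1 = real (card S1)"
  define h2 where "h2 = real (card S2)"
  have h1n: "h1 \<ge> 0" "h2 \<ge> 0" unfolding h1_def h2_def by auto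
  have h1b: "h1 \<le> 8 * r^3 * e4 * b4"
  proof -
    have "h1 * q^3 = (h1 * X) * (2 * e4)" using pos unfolding Xe by (simp add: field_simps)
    also have "\<dots> \<le> (4 * b) * (2 * e4)" by (rule mult_right_mono) (use m1 pos in \<open>simp_all add: h1_def\<close>)
    finally have "h1 * q^3 \<le> 8 * b * e4" by simp
    moreover have "h1 * b4^3 \<le> h1 * q^3 * r^3"
    proof -
      have "b4^3 \<le> (q * r)^3" by (rule power_mono[OF b4q]) (use pos in auto)
      then show ?thesis using h1n by (simp add: mult_left_mono power_mult_distrib mult.assoc)
    qed
    moreover have "h1 * q^3 * r^3 \<le> 8 * b * e4 * r^3"
      by (rule mult_right_mono) (use \<open>h1 * q^3 \<le> 8 * b * e4\<close> pos in simp_all)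
    ultimately have "h1 * b4^3 \<le> 8 * b * e4 * r^3" by linarith
    also have "\<dots> = (8 * r^3 * e4 * b4) * b4^3" using b44 by (simp add: power_numeral_reduce)
    finally show ?thesis using pos by simp
  qed
  have h2b: "h2 \<le> 12 * r * e4 * b4"
  proof -
    have "h2 * ww = (h2 * Y) * (e4 * q)" using pos unfolding Ye by (simp add: field_simps)
    also have "\<dots> \<le> (2 * w) * (e4 * q)" by (rule mult_right_mono) (use m2 pos in \<open>simp_all add: h2_def\<close>)
    finally have "h2 * ww \<le> 2 * w * (e4 * q)" by simp
    moreover have "h2 * (w / 6) \<le> h2 * ww"
      by (rule mult_left_mono) (use h1n assms(8) in \<open>simp_all add: w_def\<close>)
    ultimately have "h2 * w \<le> 6 * (2 * w * (e4 * q))" by (simp add: field_simps)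
    also have "\<dots> = (12 * e4 * q) * w" by (simp add: algebra_simps)
    finally have "h2 * w \<le> (12 * e4 * q) * w" .
    then have "h2 \<le> 12 * e4 * q" using wpos by simp
    also have "\<dots> \<le> 12 * e4 * (r * b4)" using qb4 pos by simp
    also have "\<dots> = 12 * r * e4 * b4" by (simp add: algebra_simps)
    finally show ?thesis .
  qed
  have Kb: "8 * r^3 + 12 * r \<le> 30"
  proof -
    have "r^3 \<le> 1.2^3" by (rule power_mono[OF r12]) (use pos in auto)
    then have "r^3 \<le> 216/125" by (simp add: power_divide)
    then show ?thesis using r12 by linarith
  qed
  define h where "h = real (card H)"
  have hb: "h \<le> 30 * (e4 * b4)"
  proof -
    have "h \<le> (8 * r^3 + 12 * r) * (e4 * b4)" using hle h1b h2b unfolding h_def h1_def h2_def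
      by (simp add: algebra_simps)
    also have "\<dots> \<le> 30 * (e4 * b4)" by (rule mult_right_mono[OF Kb]) (use pos in auto)
    finally show ?thesis .
  qed
  have h4: "h^4 \<le> 810000 * eps * b"
  proof -
    have "h^4 \<le> (30 * (e4 * b4))^4" by (rule power_mono[OF hb]) (simp add: h_def)
    also have "\<dots> = 810000 * eps * b" unfolding power_mult_distrib e44 b44 by simp
    finally show ?thesis .
  qed
  show ?thesis
  proof (cases "BB = {}")
    case True
    then show ?thesis unfolding BBeq using assms(2) by simp
  next
    case False
    have "4 \<le> h" using bc2[OF False] unfolding h_def by simp
    then have hh: "16 \<le> h * h" using mult_mono[of 4 h 4 h] by simp
    have "4 * real (card BB) \<le> h * h" using bc1 unfolding h_def
      by (metis of_nat_le_iff of_nat_mult of_nat_numeral)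
    then have "64 * real (card BB) \<le> 16 * (h * h)" by simp
    also have "\<dots> \<le> (h * h) * (h * h)" by (rule mult_right_mono[OF hh]) simp
    also have "\<dots> = h^4" by (simp add: power_numeral_reduce)
    finally have "64 * real (card BB) \<le> 810000 * eps * b" using h4 by linarith
    moreover have "0 \<le> eps * b" using assms(2) bpos by simp
    ultimately show ?thesis unfolding BBeq b_def by simp
  qed
qed

end
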